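(* Let $n\geqslant 2$, let $A$ be a real symmetric $n\times n$ matrix with eigenvalues $\lambda_1(A)\geqslant\lambda_2(A)\geqslant\dots\geqslant\lambda_n(A)$, and let $X_A:=\{x\in\mathbb{R}^n: xx^\top-A\succeq 0\}$. Then $X_A\neq\emptyset$ if and only if $\lambda_2(A)\leqslant 0$.
   Context: $B\succeq 0$ means the symmetric matrix $B$ is positive semidefinite. *)

theory Defs
  imports "Jordan_Normal_Form.Char_Poly" "HOL-Computational_Algebra.Polynomial" "HOL-Library.Multiset"
begin

text \<open>For a real symmetric n x n matrix all n eigenvalues are real, so this list
  has length n and its entry with index (i - 1) is the i-th largest eigenvalue.\<close>
definition eigvals_desc :: "real mat \<Rightarrow> real list" where
  "eigvals_desc A = rev (sorted_list_of_multiset (proots (char_poly A)))"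

definition eig :: "real mat \<Rightarrow> nat \<Rightarrow> real" where
  "eig A i = eigvals_desc A ! (i - 1)"

definition psd :: "real mat \<Rightarrow> bool" where
  "psd B \<longleftrightarrow> B \<in> carrier_mat (dim_row B) (dim_row B) \<and> B\<^sup>T = B \<and>
     (\<forall>v \<in> carrier_vec (dim_row B). v \<bullet> (B *\<^sub>v v) \<ge> 0)"

definition outer :: "real vec \<Rightarrow> real mat" where
  "outer x = mat (dim_vec x) (dim_vec x) (\<lambda>(i, j). x $ i * x $ j)"

definition X_set :: "nat \<Rightarrow> real mat \<Rightarrow> real vec set" where
  "X_set n A = {x \<in> carrier_vec n. psd (outer x - A)}"

end

theory Submission
  imports Defs "HOL-Computational_Algebra.Fundamental_Theorem_Algebra"
begin

lemma real_root_sym: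
  fixes A :: "real mat"
  assumes A: "A \<in> carrier_mat n n" and sym: "A\<^sup>T = A" and n: "n > 0"
  shows "\<exists>e. poly (char_poly A) e = 0"
proof -
  define Ac where "Ac = map_mat complex_of_real A"
  have Ac: "Ac \<in> carrier_mat n n" using A by (simp add: Ac_def)
  have cp: "char_poly Ac = map_poly complex_of_real (char_poly A)"
    unfolding Ac_def by (rule of_real_hom.char_poly_hom[OF A])
  have "degree (char_poly Ac) = n" using degree_monic_char_poly[OF Ac] by auto
  then obtain z where z: "poly (char_poly Ac) z = 0"
    using n fundamental_theorem_of_algebra constant_degree by (metis neq0_conv)
  hence "eigenvalue Ac z" using eigenvalue_root_char_poly[OF Ac] by simp
  from find_eigenvector[OF Ac this] obtain u where ev: "eigenvector Ac u z" by blast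
  hence u: "u \<in> carrier_vec n" "u \<noteq> 0\<^sub>v n" "Ac *\<^sub>v u = z \<cdot>\<^sub>v u"
    unfolding eigenvector_def using Ac by auto
  have comp: "(\<Sum>j<n. complex_of_real (A $$ (i,j)) * u $ j) = z * u $ i" if "i < n" for i
  proof -
    have "(Ac *\<^sub>v u) $ i = z * u $ i" using u(3) that u(1) by simp
    moreover have "(Ac *\<^sub>v u) $ i = (\<Sum>j<n. complex_of_real (A $$ (i,j)) * u $ j)"
      using that A u(1) Ac unfolding Ac_def
      by (simp add: mult_mat_vec_def scalar_prod_def row_def lessThan_atLeast0)
    ultimately show ?thesis by simp
  qed
  define N where "N = (\<Sum>i<n. cnj (u $ i) * u $ i)"
  define s where "s = (\<Sum>i<n. cnj (u $ i) * (\<Sum>j<n. complex_of_real (A $$ (i,j)) * u $ j))"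
  have "s = (\<Sum>i<n. cnj (u $ i) * (z * u $ i))" unfolding s_def
    by (rule sum.cong, auto simp: comp)
  hence sN: "s = z * N" unfolding N_def
    by (simp add: sum_distrib_left mult.commute mult.left_commute)
  have "cnj s = (\<Sum>i<n. u $ i * (\<Sum>j<n. complex_of_real (A $$ (i,j)) * cnj (u $ j)))"
    unfolding s_def by (simp add: sum_distrib_left)
  also have "\<dots> = (\<Sum>i<n. \<Sum>j<n. u $ i * complex_of_real (A $$ (j,i)) * cnj (u $ j))"
  proof -
    have "A $$ (i,j) = A $$ (j,i)" if "i < n" "j < n" for i j
      using sym that A by (metis carrier_matD index_transpose_mat(1))
    thus ?thesis by (auto simp: sum_distrib_left mult.assoc intro!: sum.cong)
  qed
  also have "\<dots> = s" unfolding s_def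
    by (subst sum.swap) (simp add: sum_distrib_left mult.commute mult.left_commute)
  finally have cs: "cnj s = s" .
  have Nreal: "cnj N = N" unfolding N_def by (simp add: mult.commute)
  have "N \<noteq> 0"
  proof
    assume N0: "N = 0"
    have "N = complex_of_real (\<Sum>i<n. (cmod (u $ i))\<^sup>2)"
      unfolding N_def of_real_sum by (rule sum.cong, simp_all add: complex_norm_square mult.commute del: of_real_power)
    hence "(\<Sum>i<n. (cmod (u $ i))\<^sup>2) = 0" using N0 by (metis of_real_eq_0_iff)
    hence "\<forall>i\<in>{..<n}. (cmod (u $ i))\<^sup>2 = 0" by (subst (asm) sum_nonneg_eq_0_iff) auto
    hence "u = 0\<^sub>v n" using u(1) by (auto intro!: eq_vecI)
    thus False using u(2) by simp
  qed
  have "cnj z * N = z * N" using cs sN Nreal by (metis complex_cnj_mult)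
  hence zr: "cnj z = z" using \<open>N \<noteq> 0\<close> by simp
  hence "z = complex_of_real (Re z)" by (metis Reals_cnj_iff complex_is_Real_iff of_real_Re)
  hence "poly (map_poly complex_of_real (char_poly A)) (complex_of_real (Re z)) = 0"
    using z cp by simp
  hence "poly (char_poly A) (Re z) = 0" by (simp add: of_real_hom.poly_map_poly)
  thus ?thesis by blast
qed


lemma householder:
  fixes v :: "real vec"
  assumes v: "v \<in> carrier_vec n" and v1: "v \<bullet> v = 1" and n: "0 < n"
  shows "\<exists>H \<in> carrier_mat n n. H\<^sup>T = H \<and> H * H = 1\<^sub>m n \<and> H *\<^sub>v unit_vec n 0 = v"
proof (cases "v = unit_vec n 0")
  case True
  thus ?thesis using v by (intro bexI[of _ "1\<^sub>m n"]) auto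
next
  case False
  define w where "w = v - unit_vec n 0"
  have w: "w \<in> carrier_vec n" using v by (simp add: w_def)
  have wi: "w $ i = v $ i - (if i = 0 then 1 else 0)" if "i < n" for i
    using that v by (simp add: w_def unit_vec_def)
  have ww: "w \<bullet> w = (\<Sum>i<n. (w $ i)^2)" using w by (simp add: scalar_prod_def power2_eq_square lessThan_atLeast0)
  have vv: "(\<Sum>i<n. (v $ i)^2) = 1" using v1 v by (simp add: scalar_prod_def power2_eq_square lessThan_atLeast0)
  have "(\<Sum>i<n. (w $ i)^2) = (\<Sum>i<n. (v $ i)^2 - (if i = 0 then 2 * v $ i else 0) + (if i = 0 then 1 else 0))"
    by (rule sum.cong, auto simp: wi power2_eq_square algebra_simps)
  also have "\<dots> = 2 - 2 * v $ 0" using n vv by (simp add: sum.distrib sum_subtractf)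
  finally have ww2: "w \<bullet> w = - 2 * w $ 0" using ww wi[OF n] by simp
  have "w \<noteq> 0\<^sub>v n"
  proof
    assume "w = 0\<^sub>v n"
    hence "v $ i = unit_vec n 0 $ i" if "i < n" for i using wi[OF that] that by (auto simp: unit_vec_def)
    hence "v = unit_vec n 0" using v by (intro eq_vecI) auto
    thus False using False by simp
  qed
  have "w \<bullet> w \<noteq> 0"
  proof
    assume "w \<bullet> w = 0"
    hence "(\<Sum>i<n. (w $ i)^2) = 0" using ww by simp
    hence "\<forall>i\<in>{..<n}. (w $ i)^2 = 0" by (subst (asm) sum_nonneg_eq_0_iff) auto
    hence "w = 0\<^sub>v n" using w by (intro eq_vecI) auto
    thus False using \<open>w \<noteq> 0\<^sub>v n\<close> by simp
  qed
  hence w0: "w $ 0 \<noteq> 0" using ww2 by auto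
  define c where "c = 2 / (w \<bullet> w)"
  have cw0: "c * w $ 0 = -1" using ww2 w0 by (simp add: c_def)
  have cc: "c * c * (w \<bullet> w) = 2 * c" using \<open>w \<bullet> w \<noteq> 0\<close> by (simp add: c_def)
  define H where "H = mat n n (\<lambda>(i,j). (if i = j then 1 else 0) - c * w $ i * w $ j)"
  have H: "H \<in> carrier_mat n n" by (simp add: H_def)
  have HT: "H\<^sup>T = H" by (rule eq_matI) (auto simp: H_def mult.commute)
  have HH: "H * H = 1\<^sub>m n"
  proof (rule eq_matI)
    fix i j assume ij: "i < dim_row (1\<^sub>m n)" "j < dim_col (1\<^sub>m n)"
    hence i: "i < n" and j: "j < n" by auto
    have "(H * H) $$ (i,j) = (\<Sum>k<n. ((if i = k then 1 else 0) - c * w $ i * w $ k) * ((if k = j then 1 else 0) - c * w $ k * w $ j))"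
      using i j by (simp add: H_def scalar_prod_def lessThan_atLeast0)
    also have "\<dots> = (\<Sum>k<n. (if k = i then (if k = j then 1 else 0) else 0)
       - (if k = i then c * w $ i * w $ j else 0) - (if k = j then c * w $ i * w $ j else 0)
       + (c * c * w $ i * w $ j) * (w $ k)^2)"
      by (rule sum.cong, auto simp: algebra_simps power2_eq_square)
    also have "\<dots> = (if i = j then 1 else 0) - c * w $ i * w $ j - c * w $ i * w $ j + c * c * w $ i * w $ j * (w \<bullet> w)"
      unfolding sum.distrib sum_subtractf sum.delta sum_distrib_left[symmetric] ww using i j by simp
    also have "\<dots> = (if i = j then 1 else 0)"
    proof -
      have "c * c * w $ i * w $ j * (w \<bullet> w) = (c * c * (w \<bullet> w)) * w $ i * w $ j" by (simp add: algebra_simps)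
      thus ?thesis using cc by simp
    qed
    finally show "(H * H) $$ (i,j) = 1\<^sub>m n $$ (i,j)" using i j by simp
  qed (auto simp: H_def)
  have He: "H *\<^sub>v unit_vec n 0 = v"
  proof (rule eq_vecI)
    fix i assume "i < dim_vec v"
    hence i: "i < n" using v by simp
    have "(H *\<^sub>v unit_vec n 0) $ i = H $$ (i, 0)"
    proof -
      have "(H *\<^sub>v unit_vec n 0) $ i = (\<Sum>k = 0..<n. H $$ (i, k) * (if k = 0 then 1 else 0))"
        using i n H by (simp add: mult_mat_vec_def scalar_prod_def unit_vec_def row_def cong: if_cong)
      also have "\<dots> = (\<Sum>k = 0..<n. if k = 0 then H $$ (i, k) else 0)" by (rule sum.cong) auto
      finally show ?thesis using n by simp
    qed
    also have "\<dots> = (if i = 0 then 1 else 0) - (c * w $ 0) * w $ i" using i n by (simp add: H_def)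
    also have "\<dots> = v $ i" using cw0 wi[OF i] by simp
    finally show "(H *\<^sub>v unit_vec n 0) $ i = v $ i" .
  qed (use v H in auto)
  show ?thesis using H HT HH He by blast
qed


definition diagm :: "real list \<Rightarrow> real mat" where
  "diagm ds = mat (length ds) (length ds) (\<lambda>(i,j). if i = j then ds ! i else 0)"

lemma diagm_carrier[simp]: "diagm ds \<in> carrier_mat (length ds) (length ds)"
  by (simp add: diagm_def)

lemma mult_unit_vec_index:
  fixes M :: "real mat"
  assumes M: "M \<in> carrier_mat n n" and i: "i < n" and j: "j < n"
  shows "(M *\<^sub>v unit_vec n j) $ i = M $$ (i, j)"
proof -
  have "(M *\<^sub>v unit_vec n j) $ i = row M i \<bullet> unit_vec n j" using M i by simp
  also have "\<dots> = M $$ (i,j)" using M i j by (simp add: scalar_prod_right_unit)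
  finally show ?thesis .
qed

lemma pos_eigvec:
  fixes A :: "real mat"
  assumes A: "A \<in> carrier_mat n n" and sym: "A\<^sup>T = A" and n: "n > 0"
  shows "\<exists>e v. v \<in> carrier_vec n \<and> v \<bullet> v = 1 \<and> A *\<^sub>v v = e \<cdot>\<^sub>v v"
proof -
  obtain e where "poly (char_poly A) e = 0" using real_root_sym[OF A sym n] by blast
  hence "eigenvalue A e" using eigenvalue_root_char_poly[OF A] by simp
  from find_eigenvector[OF A this] obtain u where "eigenvector A u e" by blast
  hence u: "u \<in> carrier_vec n" "u \<noteq> 0\<^sub>v n" "A *\<^sub>v u = e \<cdot>\<^sub>v u"
    unfolding eigenvector_def using A by auto
  have "u \<bullet> u > 0" using conjugate_square_greater_0_vec[OF u(1)] u(2) by simp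
  define v where "v = (1 / sqrt (u \<bullet> u)) \<cdot>\<^sub>v u"
  have v: "v \<in> carrier_vec n" using u by (simp add: v_def)
  have "v \<bullet> v = (1 / sqrt (u \<bullet> u)) * ((1 / sqrt (u \<bullet> u)) * (u \<bullet> u))"
    unfolding v_def using u(1) by simp
  also have "\<dots> = 1" using \<open>u \<bullet> u > 0\<close> by (simp add: field_simps)
  finally have vv: "v \<bullet> v = 1" .
  have "A *\<^sub>v v = e \<cdot>\<^sub>v v" unfolding v_def using mult_mat_vec[OF A u(1)] u(3)
    by (simp add: smult_smult_assoc mult.commute)
  thus ?thesis using v vv by blast
qed

lemma spectral:
  fixes A :: "real mat"
  assumes "A \<in> carrier_mat n n" and "A\<^sup>T = A"
  shows "\<exists>Q ds. Q \<in> carrier_mat n n \<and> Q\<^sup>T * Q = 1\<^sub>m n \<and> Q * Q\<^sup>T = 1\<^sub>m n \<and> length ds = n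
     \<and> A = Q * diagm ds * Q\<^sup>T"
  using assms
proof (induction n arbitrary: A)
  case 0
  show ?case
    by (rule exI[of _ "1\<^sub>m 0"], rule exI[of _ "[]"], insert 0, auto intro!: eq_matI simp: diagm_def)
next
  case (Suc m A)
  note A = Suc.prems(1) and sym = Suc.prems(2)
  let ?n = "Suc m"
  obtain e v where v: "v \<in> carrier_vec ?n" "v \<bullet> v = 1" and Av: "A *\<^sub>v v = e \<cdot>\<^sub>v v"
    using pos_eigvec[OF A sym] by blast
  obtain H where H: "H \<in> carrier_mat ?n ?n" and HT: "H\<^sup>T = H" and HH: "H * H = 1\<^sub>m ?n"
    and He: "H *\<^sub>v unit_vec ?n 0 = v"
    using householder[OF v] by blast
  have Hv: "H *\<^sub>v v = unit_vec ?n 0"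
    using He H by (metis HH assoc_mult_mat_vec one_mult_mat_vec unit_vec_carrier)
  define A' where "A' = H * A * H"
  have A': "A' \<in> carrier_mat ?n ?n" using H A by (simp add: A'_def)
  have A'T: "A'\<^sup>T = A'"
  proof -
    have "A'\<^sup>T = H\<^sup>T * (H * A)\<^sup>T" unfolding A'_def
      by (rule transpose_mult[of _ ?n ?n], use H A in auto)
    also have "(H * A)\<^sup>T = A\<^sup>T * H\<^sup>T" by (rule transpose_mult[of _ ?n ?n], use H A in auto)
    finally show ?thesis unfolding HT sym A'_def using H A by simp
  qed
  have A'e: "A' *\<^sub>v unit_vec ?n 0 = e \<cdot>\<^sub>v unit_vec ?n 0"
  proof -
    have "A' *\<^sub>v unit_vec ?n 0 = (H * A) *\<^sub>v (H *\<^sub>v unit_vec ?n 0)"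
      unfolding A'_def by (rule assoc_mult_mat_vec[of _ ?n ?n _ ?n], use H A in auto)
    also have "\<dots> = H *\<^sub>v (A *\<^sub>v (H *\<^sub>v unit_vec ?n 0))"
      by (rule assoc_mult_mat_vec[of _ ?n ?n _ ?n], use H A in auto)
    also have "\<dots> = e \<cdot>\<^sub>v unit_vec ?n 0" unfolding He Av using mult_mat_vec[OF H v(1)] Hv by simp
    finally show ?thesis .
  qed
  have col0: "A' $$ (i, 0) = (if i = 0 then e else 0)" if "i < ?n" for i
    using arg_cong[OF A'e, of "\<lambda>x. x $ i"] mult_unit_vec_index[OF A' that] that by simp
  have row0: "A' $$ (0, j) = (if j = 0 then e else 0)" if "j < ?n" for j
    using col0[OF that] A'T that A' by (metis carrier_matD index_transpose_mat(1) zero_less_Suc)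
  define A3 where "A3 = mat m m (\<lambda>(i,j). A' $$ (Suc i, Suc j))"
  have A3: "A3 \<in> carrier_mat m m" by (simp add: A3_def)
  have A3T: "A3\<^sup>T = A3"
  proof (rule eq_matI)
    fix i j assume "i < dim_row A3" "j < dim_col A3"
    hence "i < m" "j < m" by (auto simp: A3_def)
    thus "A3\<^sup>T $$ (i, j) = A3 $$ (i, j)" using A'T A'
      by (simp add: A3_def) (metis Suc_less_eq carrier_matD index_transpose_mat(1))
  qed (auto simp: A3_def)
  obtain Q3 ds3 where Q3: "Q3 \<in> carrier_mat m m" and Q3TQ3: "Q3\<^sup>T * Q3 = 1\<^sub>m m"
    and Q3Q3T: "Q3 * Q3\<^sup>T = 1\<^sub>m m" and ds3: "length ds3 = m" and A3eq: "A3 = Q3 * diagm ds3 * Q3\<^sup>T"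
    using Suc.IH[OF A3 A3T] by blast
  define E where "E = mat 1 1 (\<lambda>_. e)"
  have E: "E \<in> carrier_mat 1 1" by (simp add: E_def)
  have A'blk: "A' = four_block_mat E (0\<^sub>m 1 m) (0\<^sub>m m 1) A3"
  proof (rule eq_matI)
    fix i j assume ij: "i < dim_row (four_block_mat E (0\<^sub>m 1 m) (0\<^sub>m m 1) A3)"
      "j < dim_col (four_block_mat E (0\<^sub>m 1 m) (0\<^sub>m m 1) A3)"
    hence i: "i < ?n" and j: "j < ?n" using E A3 by auto
    show "A' $$ (i, j) = four_block_mat E (0\<^sub>m 1 m) (0\<^sub>m m 1) A3 $$ (i, j)"
      using i j E A3 col0 row0 by (cases "i = 0"; cases "j = 0") (auto simp: E_def A3_def)
  qed (use A' E A3 in auto)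
  define F where "F = four_block_mat (1\<^sub>m 1) (0\<^sub>m 1 m) (0\<^sub>m m 1) Q3"
  have F: "F \<in> carrier_mat ?n ?n" using four_block_carrier_mat[OF one_carrier_mat[of 1] Q3] by (simp add: F_def)
  have FT: "F\<^sup>T = four_block_mat (1\<^sub>m 1) (0\<^sub>m 1 m) (0\<^sub>m m 1) Q3\<^sup>T"
    unfolding F_def by (subst transpose_four_block_mat[OF one_carrier_mat zero_carrier_mat zero_carrier_mat Q3], auto)
  have FTc: "F\<^sup>T \<in> carrier_mat ?n ?n" using F by simp
  have FTF: "F\<^sup>T * F = 1\<^sub>m ?n"
    unfolding FT unfolding F_def using Q3
    by (subst mult_four_block_mat[OF _ zero_carrier_mat zero_carrier_mat _ _ zero_carrier_mat zero_carrier_mat], auto) (auto simp: Q3TQ3)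
  have FFT: "F * F\<^sup>T = 1\<^sub>m ?n"
    unfolding FT unfolding F_def using Q3
    by (subst mult_four_block_mat[OF _ zero_carrier_mat zero_carrier_mat _ _ zero_carrier_mat zero_carrier_mat], auto) (auto simp: Q3Q3T)
  define D where "D = diagm (e # ds3)"
  have D: "D \<in> carrier_mat ?n ?n" using ds3 diagm_carrier[of "e # ds3"] by (simp add: D_def)
  have Dblk: "D = four_block_mat E (0\<^sub>m 1 m) (0\<^sub>m m 1) (diagm ds3)"
    by (rule eq_matI) (auto simp: D_def E_def diagm_def ds3)
  have FDF: "F * D * F\<^sup>T = A'"
  proof -
    have "F * D = four_block_mat E (0\<^sub>m 1 m) (0\<^sub>m m 1) (Q3 * diagm ds3)"
      unfolding F_def Dblk using Q3 E ds3 diagm_carrier[of ds3]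
      by (subst mult_four_block_mat[OF _ zero_carrier_mat zero_carrier_mat _ _ zero_carrier_mat zero_carrier_mat], auto)
    also have "\<dots> * F\<^sup>T = four_block_mat E (0\<^sub>m 1 m) (0\<^sub>m m 1) (Q3 * diagm ds3 * Q3\<^sup>T)"
      unfolding FT using Q3 E ds3 diagm_carrier[of ds3]
      by (subst mult_four_block_mat[OF _ zero_carrier_mat zero_carrier_mat _ _ zero_carrier_mat zero_carrier_mat], auto)
    finally show ?thesis using A'blk A3eq by simp
  qed
  define Q where "Q = H * F"
  have Q: "Q \<in> carrier_mat ?n ?n" using H F by (simp add: Q_def)
  have QT: "Q\<^sup>T = F\<^sup>T * H" unfolding Q_def using H F HT by (simp add: transpose_mult)
  have "Q\<^sup>T * Q = F\<^sup>T * (H * H) * F" unfolding QT unfolding Q_def using H F FTc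
    by (simp add: assoc_mult_mat[of _ ?n ?n _ ?n _ ?n])
  also have "\<dots> = 1\<^sub>m ?n" using HH FTF F FTc by simp
  finally have QTQ: "Q\<^sup>T * Q = 1\<^sub>m ?n" .
  have "Q * Q\<^sup>T = H * (F * F\<^sup>T) * H" unfolding QT unfolding Q_def using H F FTc
    by (simp add: assoc_mult_mat[of _ ?n ?n _ ?n _ ?n])
  also have "\<dots> = 1\<^sub>m ?n" using HH FFT H by simp
  finally have QQT: "Q * Q\<^sup>T = 1\<^sub>m ?n" .
  have "Q * D * Q\<^sup>T = H * (F * D * F\<^sup>T) * H" unfolding QT unfolding Q_def using H F FTc D
    by (simp add: assoc_mult_mat[of _ ?n ?n _ ?n _ ?n])
  also have "\<dots> = (H * H) * A * (H * H)" unfolding FDF A'_def using H A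
    by (simp add: assoc_mult_mat[of _ ?n ?n _ ?n _ ?n])
  also have "\<dots> = A" using HH A by simp
  finally have "A = Q * D * Q\<^sup>T" by simp
  thus ?case using Q QTQ QQT ds3 unfolding D_def by (intro exI[of _ Q] exI[of _ "e # ds3"]) auto
qed


lemma proots_linprod: "proots (\<Prod>d\<leftarrow>ds. [:- d, 1:]) = mset (ds :: real list)"
proof (induction ds)
  case (Cons d ds)
  have "(\<Prod>d\<leftarrow>ds. [:- d, 1:]) \<noteq> (0 :: real poly)" by (auto simp: prod_list_zero_iff)
  hence "proots ([:- d, 1:] * (\<Prod>d\<leftarrow>ds. [:- d, 1:])) = proots [:- d, 1:] + proots (\<Prod>d\<leftarrow>ds. [:- d, 1:])"
    by (intro proots_mult) auto
  also have "proots [:- d, 1:] = {#d#}" using proots_linear_factor[of "-d"] by simp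
  finally show ?case using Cons by simp
qed simp

lemma diagm_mult_vec: "w \<in> carrier_vec (length ds) \<Longrightarrow> i < length ds \<Longrightarrow> (diagm ds *\<^sub>v w) $ i = ds ! i * w $ i"
proof -
  assume w: "w \<in> carrier_vec (length ds)" and i: "i < length ds"
  have "(diagm ds *\<^sub>v w) $ i = (\<Sum>k = 0..<length ds. (if i = k then ds ! i else 0) * w $ k)"
    using w i by (simp add: diagm_def mult_mat_vec_def scalar_prod_def row_def)
  also have "\<dots> = (\<Sum>k = 0..<length ds. if k = i then ds ! i * w $ k else 0)" by (rule sum.cong) auto
  finally show ?thesis using i by simp
qed

lemma diagm_qf: "w \<in> carrier_vec (length ds) \<Longrightarrow> w \<bullet> (diagm ds *\<^sub>v w) = (\<Sum>k<length ds. ds ! k * (w $ k)^2)"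
proof -
  assume w: "w \<in> carrier_vec (length ds)"
  have dim: "dim_vec (diagm ds *\<^sub>v w) = length ds" by (simp add: diagm_def)
  have "w \<bullet> (diagm ds *\<^sub>v w) = (\<Sum>k\<in>{0..<length ds}. w $ k * (diagm ds *\<^sub>v w) $ k)"
    unfolding scalar_prod_def dim ..
  also have "\<dots> = (\<Sum>k<length ds. ds ! k * (w $ k)^2)" unfolding lessThan_atLeast0
    by (rule sum.cong) (auto simp: diagm_mult_vec[OF w] power2_eq_square)
  finally show ?thesis .
qed

lemma outer_qf:
  fixes x v :: "real vec"
  assumes x: "x \<in> carrier_vec n" and v: "v \<in> carrier_vec n"
  shows "v \<bullet> (outer x *\<^sub>v v) = (x \<bullet> v)^2"
proof -
  have "outer x *\<^sub>v v = (x \<bullet> v) \<cdot>\<^sub>v x"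
  proof (rule eq_vecI)
    fix i assume "i < dim_vec ((x \<bullet> v) \<cdot>\<^sub>v x)"
    hence i: "i < n" using x by simp
    have "(outer x *\<^sub>v v) $ i = (\<Sum>j = 0..<n. x $ i * x $ j * v $ j)"
      using x v i by (simp add: outer_def mult_mat_vec_def scalar_prod_def row_def)
    also have "\<dots> = x $ i * (x \<bullet> v)" using x v by (simp add: scalar_prod_def sum_distrib_left mult.assoc)
    finally show "(outer x *\<^sub>v v) $ i = ((x \<bullet> v) \<cdot>\<^sub>v x) $ i" using i x by simp
  qed (use x in \<open>auto simp: outer_def\<close>)
  hence "v \<bullet> (outer x *\<^sub>v v) = (x \<bullet> v) * (v \<bullet> x)" using x v by simp
  also have "v \<bullet> x = x \<bullet> v" using comm_scalar_prod[OF v x] .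
  finally show ?thesis by (simp add: power2_eq_square)
qed

lemma psd_iff:
  fixes A :: "real mat" and x :: "real vec"
  assumes A: "A \<in> carrier_mat n n" and sym: "A\<^sup>T = A" and x: "x \<in> carrier_vec n"
  shows "psd (outer x - A) \<longleftrightarrow> (\<forall>v \<in> carrier_vec n. v \<bullet> (A *\<^sub>v v) \<le> (x \<bullet> v)^2)"
proof -
  have ox: "outer x \<in> carrier_mat n n" using x by (simp add: outer_def)
  have M: "outer x - A \<in> carrier_mat n n" using A by (rule minus_carrier_mat)
  have dr: "dim_row (outer x - A) = n" using M A by simp
  have T: "(outer x - A)\<^sup>T = outer x - A"
  proof (rule eq_matI)
    fix i j assume "i < dim_row (outer x - A)" "j < dim_col (outer x - A)"
    hence i: "i < n" and j: "j < n" using M by auto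
    have "A $$ (j, i) = A $$ (i, j)" using sym i j A by (metis carrier_matD index_transpose_mat(1))
    thus "(outer x - A)\<^sup>T $$ (i, j) = (outer x - A) $$ (i, j)"
      using i j A ox x by (simp add: outer_def mult.commute)
  qed (use M A in auto)
  have q: "v \<bullet> ((outer x - A) *\<^sub>v v) = (x \<bullet> v)^2 - v \<bullet> (A *\<^sub>v v)" if v: "v \<in> carrier_vec n" for v
  proof -
    have "(outer x - A) *\<^sub>v v = outer x *\<^sub>v v - A *\<^sub>v v"
      using ox A v by (simp add: minus_mult_distrib_mat_vec)
    hence "v \<bullet> ((outer x - A) *\<^sub>v v) = v \<bullet> (outer x *\<^sub>v v) - v \<bullet> (A *\<^sub>v v)"
      using ox A v by (simp add: scalar_prod_minus_distrib)
    thus ?thesis using outer_qf[OF x v] by simp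
  qed
  show ?thesis unfolding psd_def dr using M T q by auto
qed


lemma two_pos_iff:
  fixes xs :: "real list"
  shows "(\<exists>i j. i < length xs \<and> j < length xs \<and> i \<noteq> j \<and> xs ! i > 0 \<and> xs ! j > 0)
    \<longleftrightarrow> 2 \<le> length (filter (\<lambda>x. 0 < x) xs)"
proof -
  define S where "S = {i. i < length xs \<and> 0 < xs ! i}"
  have fin: "finite S" by (simp add: S_def)
  have len: "length (filter (\<lambda>x. 0 < x) xs) = card S" unfolding S_def by (rule length_filter_conv_card)
  have eq: "(\<exists>a b. a \<in> S \<and> b \<in> S \<and> a \<noteq> b) \<longleftrightarrow> 2 \<le> card S"
  proof
    assume "\<exists>a b. a \<in> S \<and> b \<in> S \<and> a \<noteq> b"
    then obtain a b where "a \<in> S" "b \<in> S" "a \<noteq> b" by blast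
    hence "card {a, b} \<le> card S" using fin by (intro card_mono) auto
    thus "2 \<le> card S" using \<open>a \<noteq> b\<close> by simp
  next
    assume c: "2 \<le> card S"
    show "\<exists>a b. a \<in> S \<and> b \<in> S \<and> a \<noteq> b"
    proof (rule ccontr)
      assume "\<not> ?thesis"
      hence "\<forall>a\<in>S. \<forall>b\<in>S. a = b" by blast
      hence "card S \<le> 1" using fin by (simp add: card_le_Suc0_iff_eq)
      thus False using c by simp
    qed
  qed
  have "(\<exists>i j. i < length xs \<and> j < length xs \<and> i \<noteq> j \<and> xs ! i > 0 \<and> xs ! j > 0)
    \<longleftrightarrow> (\<exists>a b. a \<in> S \<and> b \<in> S \<and> a \<noteq> b)" unfolding S_def by blast
  thus ?thesis using eq len by simp
qed

lemma filter_sort_len: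
  fixes xs :: "real list"
  shows "length (filter P (sort xs)) = length (filter P xs)"
proof -
  have "mset (filter P (sort xs)) = mset (filter P xs)" by simp
  thus ?thesis by (metis size_mset)
qed

lemma second_largest:
  fixes xs :: "real list"
  assumes "2 \<le> length xs"
  shows "rev (sort xs) ! 1 \<le> 0 \<longleftrightarrow>
     \<not> (\<exists>i j. i < length xs \<and> j < length xs \<and> i \<noteq> j \<and> xs ! i > 0 \<and> xs ! j > 0)"
proof -
  define L where "L = sort xs"
  define k where "k = length L"
  have k: "k = length xs" "2 \<le> k" using assms by (auto simp: k_def L_def)
  have sL: "sorted L" by (simp add: L_def)
  have r: "rev L ! 1 = L ! (k - 2)" using k by (simp add: rev_nth k_def numeral_2_eq_2)
  have "(\<exists>i j. i < length xs \<and> j < length xs \<and> i \<noteq> j \<and> xs ! i > 0 \<and> xs ! j > 0)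
     \<longleftrightarrow> (\<exists>i j. i < k \<and> j < k \<and> i \<noteq> j \<and> L ! i > 0 \<and> L ! j > 0)"
    unfolding two_pos_iff k_def L_def filter_sort_len ..
  also have "\<dots> \<longleftrightarrow> L ! (k - 2) > 0"
  proof
    assume "\<exists>i j. i < k \<and> j < k \<and> i \<noteq> j \<and> L ! i > 0 \<and> L ! j > 0"
    then obtain i j where ij: "i < k" "j < k" "i \<noteq> j" "L ! i > 0" "L ! j > 0" by blast
    define a where "a = min i j"
    have "a \<le> k - 2" "L ! a > 0" using ij by (auto simp: a_def min_def)
    moreover have "L ! a \<le> L ! (k - 2)" using sL \<open>a \<le> k - 2\<close> k
      by (intro sorted_nth_mono) (auto simp: k_def)
    ultimately show "L ! (k - 2) > 0" by simp
  next
    assume p: "L ! (k - 2) > 0"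
    have "L ! (k - 2) \<le> L ! (k - 1)" using sL k by (intro sorted_nth_mono) (auto simp: k_def)
    thus "\<exists>i j. i < k \<and> j < k \<and> i \<noteq> j \<and> L ! i > 0 \<and> L ! j > 0" using p k
      by (intro exI[of _ "k - 2"] exI[of _ "k - 1"]) auto
  qed
  finally show ?thesis using r unfolding L_def by auto
qed


lemma two_point_sum:
  fixes f :: "nat \<Rightarrow> real \<Rightarrow> real"
  assumes "\<And>k. f k 0 = 0" "i < n" "j < n" "i \<noteq> j"
  shows "(\<Sum>k<n. f k (if k = i then a else if k = j then b else 0)) = f i a + f j b"
proof -
  have "(\<Sum>k<n. f k (if k = i then a else if k = j then b else 0))
      = (\<Sum>k<n. (if k = i then f i a else 0) + (if k = j then f j b else 0))"
    by (rule sum.cong) (use assms in auto)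
  also have "\<dots> = f i a + f j b" using assms by (simp add: sum.distrib)
  finally show ?thesis .
qed

lemma key:
  fixes A Q :: "real mat" and ds :: "real list"
  assumes A: "A \<in> carrier_mat n n" and sym: "A\<^sup>T = A" and Q: "Q \<in> carrier_mat n n"
    and QTQ: "Q\<^sup>T * Q = 1\<^sub>m n" and ds: "length ds = n" and Aeq: "A = Q * diagm ds * Q\<^sup>T"
  shows "(\<exists>x\<in>carrier_vec n. psd (outer x - A)) \<longleftrightarrow>
     \<not> (\<exists>i j. i < n \<and> j < n \<and> i \<noteq> j \<and> ds ! i > 0 \<and> ds ! j > 0)"
proof -
  have QT: "Q\<^sup>T \<in> carrier_mat n n" using Q by simp
  have D: "diagm ds \<in> carrier_mat n n" using ds diagm_carrier[of ds] by simp
  have dot: "x \<bullet> (Q *\<^sub>v z) = (Q\<^sup>T *\<^sub>v x) \<bullet> z" if "x \<in> carrier_vec n" "z \<in> carrier_vec n" for x z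
    using transpose_vec_mult_scalar[OF Q that(2) that(1)] by simp
  have qf: "v \<bullet> (A *\<^sub>v v) = (\<Sum>k<n. ds ! k * ((Q\<^sup>T *\<^sub>v v) $ k)^2)" if v: "v \<in> carrier_vec n" for v
  proof -
    have "A *\<^sub>v v = (Q * diagm ds) *\<^sub>v (Q\<^sup>T *\<^sub>v v)" unfolding Aeq
      by (rule assoc_mult_mat_vec[of _ n n _ n], use Q D v in auto)
    also have "\<dots> = Q *\<^sub>v (diagm ds *\<^sub>v (Q\<^sup>T *\<^sub>v v))"
      by (rule assoc_mult_mat_vec[of _ n n _ n], use Q D v in auto)
    finally have "A *\<^sub>v v = Q *\<^sub>v (diagm ds *\<^sub>v (Q\<^sup>T *\<^sub>v v))" .
    hence "v \<bullet> (A *\<^sub>v v) = (Q\<^sup>T *\<^sub>v v) \<bullet> (diagm ds *\<^sub>v (Q\<^sup>T *\<^sub>v v))"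
      using dot[OF v, of "diagm ds *\<^sub>v (Q\<^sup>T *\<^sub>v v)"] D QT v by simp
    also have "\<dots> = (\<Sum>k<n. ds ! k * ((Q\<^sup>T *\<^sub>v v) $ k)^2)"
      using diagm_qf[of "Q\<^sup>T *\<^sub>v v" ds] QT v ds by simp
    finally show ?thesis .
  qed
  show ?thesis
  proof
    assume "\<exists>x\<in>carrier_vec n. psd (outer x - A)"
    then obtain x where x: "x \<in> carrier_vec n" and p: "psd (outer x - A)" by blast
    have pv: "v \<bullet> (A *\<^sub>v v) \<le> (x \<bullet> v)^2" if "v \<in> carrier_vec n" for v
      using p psd_iff[OF A sym x] that by blast
    show "\<not> (\<exists>i j. i < n \<and> j < n \<and> i \<noteq> j \<and> ds ! i > 0 \<and> ds ! j > 0)"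
    proof
      assume "\<exists>i j. i < n \<and> j < n \<and> i \<noteq> j \<and> ds ! i > 0 \<and> ds ! j > 0"
      then obtain i j where ij: "i < n" "j < n" "i \<noteq> j" "ds ! i > 0" "ds ! j > 0" by blast
      define y where "y = Q\<^sup>T *\<^sub>v x"
      have y: "y \<in> carrier_vec n" using QT x by (simp add: y_def)
      define a where "a = (if y $ i = 0 \<and> y $ j = 0 then 1 else y $ j)"
      define b where "b = (if y $ i = 0 \<and> y $ j = 0 then 0 else - y $ i)"
      define z where "z = vec n (\<lambda>k. if k = i then a else if k = j then b else 0)"
      have z: "z \<in> carrier_vec n" by (simp add: z_def)
      define v where "v = Q *\<^sub>v z"
      have v: "v \<in> carrier_vec n" using Q z by (simp add: v_def)
      have w: "Q\<^sup>T *\<^sub>v v = z" unfolding v_def using QT Q z QTQ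
        by (metis assoc_mult_mat_vec one_mult_mat_vec)
      have "x \<bullet> v = y \<bullet> z" unfolding v_def y_def using dot[OF x z] .
      also have "\<dots> = (\<Sum>k<n. y $ k * (if k = i then a else if k = j then b else 0))"
        using y z by (simp add: scalar_prod_def z_def lessThan_atLeast0)
      also have "\<dots> = y $ i * a + y $ j * b"
        by (rule two_point_sum[of "\<lambda>k t. y $ k * t"]) (use ij in auto)
      also have "\<dots> = 0" by (auto simp: a_def b_def)
      finally have xv: "x \<bullet> v = 0" .
      have "v \<bullet> (A *\<^sub>v v) = (\<Sum>k<n. ds ! k * (z $ k)^2)" using qf[OF v] w by simp
      also have "\<dots> = (\<Sum>k<n. ds ! k * (if k = i then a else if k = j then b else 0)^2)"
        by (rule sum.cong) (auto simp: z_def)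
      also have "\<dots> = ds ! i * a^2 + ds ! j * b^2"
        by (rule two_point_sum[of "\<lambda>k t. ds ! k * t^2"]) (use ij in auto)
      finally have vAv: "v \<bullet> (A *\<^sub>v v) = ds ! i * a^2 + ds ! j * b^2" .
      have "ds ! i * a^2 + ds ! j * b^2 > 0"
      proof (cases "y $ i = 0 \<and> y $ j = 0")
        case True
        thus ?thesis using ij by (simp add: a_def b_def)
      next
        case False
        hence "a \<noteq> 0 \<or> b \<noteq> 0" by (auto simp: a_def b_def)
        moreover have "ds ! i * a^2 \<ge> 0" "ds ! j * b^2 \<ge> 0" using ij by auto
        moreover have "a \<noteq> 0 \<Longrightarrow> ds ! i * a^2 > 0" using ij by simp
        moreover have "b \<noteq> 0 \<Longrightarrow> ds ! j * b^2 > 0" using ij by simp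
        ultimately show ?thesis by linarith
      qed
      thus False using pv[OF v] xv vAv by simp
    qed
  next
    assume np: "\<not> (\<exists>i j. i < n \<and> j < n \<and> i \<noteq> j \<and> ds ! i > 0 \<and> ds ! j > 0)"
    show "\<exists>x\<in>carrier_vec n. psd (outer x - A)"
    proof (cases "\<exists>k<n. ds ! k > 0")
      case True
      then obtain k where k: "k < n" "ds ! k > 0" by blast
      have nonpos: "ds ! i \<le> 0" if "i < n" "i \<noteq> k" for i using np k that by force
      define y where "y = sqrt (ds ! k) \<cdot>\<^sub>v unit_vec n k"
      have y: "y \<in> carrier_vec n" by (simp add: y_def)
      define x where "x = Q *\<^sub>v y"
      have x: "x \<in> carrier_vec n" using Q y by (simp add: x_def)
      have "\<forall>v \<in> carrier_vec n. v \<bullet> (A *\<^sub>v v) \<le> (x \<bullet> v)^2"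
      proof
        fix v :: "real vec" assume v: "v \<in> carrier_vec n"
        define w where "w = Q\<^sup>T *\<^sub>v v"
        have w: "w \<in> carrier_vec n" using QT v by (simp add: w_def)
        have "x \<bullet> v = v \<bullet> x" using comm_scalar_prod[OF x v] .
        also have "\<dots> = w \<bullet> y" unfolding x_def w_def using dot[OF v y] .
        also have "\<dots> = sqrt (ds ! k) * w $ k" unfolding y_def using w k by simp
        finally have "(x \<bullet> v)^2 = ds ! k * (w $ k)^2" using k by (simp add: power_mult_distrib)
        moreover have "v \<bullet> (A *\<^sub>v v) = ds ! k * (w $ k)^2 + (\<Sum>i\<in>{..<n} - {k}. ds ! i * (w $ i)^2)"
          unfolding qf[OF v] w_def[symmetric] using k by (simp add: sum.remove)
        moreover have "(\<Sum>i\<in>{..<n} - {k}. ds ! i * (w $ i)^2) \<le> 0"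
          by (rule sum_nonpos) (auto intro!: mult_nonpos_nonneg nonpos)
        ultimately show "v \<bullet> (A *\<^sub>v v) \<le> (x \<bullet> v)^2" by simp
      qed
      thus ?thesis using psd_iff[OF A sym x] x by blast
    next
      case False
      have "\<forall>v \<in> carrier_vec n. v \<bullet> (A *\<^sub>v v) \<le> (0\<^sub>v n \<bullet> v)^2"
      proof
        fix v :: "real vec" assume v: "v \<in> carrier_vec n"
        have "(\<Sum>k<n. ds ! k * ((Q\<^sup>T *\<^sub>v v) $ k)^2) \<le> 0"
          by (rule sum_nonpos) (use False in \<open>auto intro!: mult_nonpos_nonneg\<close>)
        thus "v \<bullet> (A *\<^sub>v v) \<le> (0\<^sub>v n \<bullet> v)^2" using qf[OF v] v by simp
      qed
      hence "psd (outer (0\<^sub>v n) - A)" using psd_iff[OF A sym zero_carrier_vec[of n]] by blast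
      thus ?thesis using zero_carrier_vec[of n] by blast
    qed
  qed
qed

theorem lemma1:
  fixes n :: nat and A :: "real mat"
  assumes "n \<ge> 2" and "A \<in> carrier_mat n n" and "A\<^sup>T = A"
  shows "X_set n A \<noteq> {} \<longleftrightarrow> eig A 2 \<le> 0"
proof -
  note A = assms(2) and sym = assms(3)
  obtain Q ds where Q: "Q \<in> carrier_mat n n" and QTQ: "Q\<^sup>T * Q = 1\<^sub>m n" and QQT: "Q * Q\<^sup>T = 1\<^sub>m n"
    and ds: "length ds = n" and Aeq: "A = Q * diagm ds * Q\<^sup>T"
    using spectral[OF A sym] by blast
  have D: "diagm ds \<in> carrier_mat n n" using ds diagm_carrier[of ds] by simp
  have "similar_mat_wit A (diagm ds) Q Q\<^sup>T"
    unfolding similar_mat_wit_def Let_def using A Q D QTQ QQT Aeq by auto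
  hence "similar_mat A (diagm ds)" unfolding similar_mat_def by blast
  hence cp: "char_poly A = char_poly (diagm ds)" by (rule char_poly_similar)
  have ut: "upper_triangular (diagm ds)" by (auto simp: upper_triangular_def diagm_def)
  have dg: "diag_mat (diagm ds) = ds"
    by (rule nth_equalityI) (auto simp: diag_mat_def diagm_def)
  have "char_poly A = (\<Prod>a\<leftarrow>ds. [:- a, 1:])"
    using char_poly_upper_triangular[OF D ut] cp dg by simp
  hence "proots (char_poly A) = mset ds" by (simp add: proots_linprod)
  hence e2: "eig A 2 = rev (sort ds) ! 1"
    by (simp add: eig_def eigvals_desc_def sorted_list_of_multiset_mset)
  have "X_set n A \<noteq> {} \<longleftrightarrow> (\<exists>x\<in>carrier_vec n. psd (outer x - A))"
    by (auto simp: X_set_def)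
  also have "\<dots> \<longleftrightarrow> \<not> (\<exists>i j. i < n \<and> j < n \<and> i \<noteq> j \<and> ds ! i > 0 \<and> ds ! j > 0)"
    by (rule key[OF A sym Q QTQ ds Aeq])
  also have "\<dots> \<longleftrightarrow> eig A 2 \<le> 0"
    unfolding e2 using second_largest[of ds] ds assms(1) by simp
  finally show ?thesis .
qed

end
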